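(* Let $F$ be a field whose characteristic is not $2$, and let $k\geq 4$ be an integer. (i) Let $x\in F$. If the characteristic of $F$ is not $3$ or $x\neq 0$, then $x$ can be written as $x=a_1+\cdots+a_k$ with $a_1,\ldots,a_k\in F$ and $a_1a_2\cdots a_k=-1$. (ii) If the characteristic of $F$ is not $3$, then every $x\in F$ can be written as $x=a_1+\cdots+a_k$ with $a_1,\ldots,a_k\in F$ and $a_1a_2\cdots a_k=1$. *)

theory Defs
  imports Main
begin

end

theory Submission
  imports Defs
begin

lemma two_nz: assumes "CHAR('a::field) \<noteq> 2" shows "(2::'a) \<noteq> 0"
proof
  assume "(2::'a) = 0"
  then have "of_nat 2 = (0::'a)" by simp
  then have "CHAR('a) dvd 2" by (simp only: of_nat_eq_0_iff_char_dvd)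
  then have d: "CHAR('a) dvd 2" by (simp only: of_nat_eq_0_iff_char_dvd)
  have "CHAR('a) \<le> 2" using dvd_imp_le[OF d] by simp
  then have "CHAR('a) = 0 \<or> CHAR('a) = 1 \<or> CHAR('a) = 2" by arith
  then have "CHAR('a) = 2" using d CHAR_not_1[where 'a='a] by auto
  then show False using assms by auto
qed

lemma three_nz: assumes "CHAR('a::field) \<noteq> 3" shows "(3::'a) \<noteq> 0"
proof
  assume "(3::'a) = 0"
  then have "of_nat 3 = (0::'a)" by simp
  then have d: "CHAR('a) dvd 3" by (simp only: of_nat_eq_0_iff_char_dvd)
  have "CHAR('a) \<le> 3" using dvd_imp_le[OF d] by simp
  then have "CHAR('a) = 0 \<or> CHAR('a) = 1 \<or> CHAR('a) = 2 \<or> CHAR('a) = 3" by arith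
  moreover have "\<not> (2::nat) dvd 3" by simp
  ultimately show False using assms d CHAR_not_1[where 'a='a] by auto
qed

lemma three_z: assumes "CHAR('a::field) = 3" shows "(3::'a) = 0"
  using of_nat_CHAR[where 'a='a] assms by simp

lemma split4_sum: "(k::nat) \<ge> 4 \<Longrightarrow> (\<Sum>i<k. f i) = f 0 + f 1 + f 2 + f 3 + (\<Sum>i\<in>{4..<k}. (f i :: 'a::comm_monoid_add))"
proof -
  assume k: "k \<ge> 4"
  have "{..<k} = {..<4} \<union> {4..<k}" using k by auto
  then have "(\<Sum>i<k. f i) = (\<Sum>i<4. f i) + (\<Sum>i\<in>{4..<k}. f i)"
    using sum.union_disjoint[of "{..<4}" "{4..<k}" f] by (simp add: ivl_disj_int_one(2))
  then show ?thesis by (simp add: numeral_eq_Suc add.assoc)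
qed

lemma split4_prod: "(k::nat) \<ge> 4 \<Longrightarrow> (\<Prod>i<k. f i) = f 0 * f 1 * f 2 * f 3 * (\<Prod>i\<in>{4..<k}. (f i :: 'a::comm_monoid_mult))"
proof -
  assume k: "k \<ge> 4"
  have "{..<k} = {..<4} \<union> {4..<k}" using k by auto
  then have "(\<Prod>i<k. f i) = (\<Prod>i<4. f i) * (\<Prod>i\<in>{4..<k}. f i)"
    using prod.union_disjoint[of "{..<4}" "{4..<k}" f] by (simp add: ivl_disj_int_one(2))
  then show ?thesis by (simp add: numeral_eq_Suc mult.assoc)
qed

lemma build:
  fixes bA bB bC bD :: "'a::field"
  assumes k: "k \<ge> 4"
    and s: "bA + bB + bC + bD + (\<Sum>i\<in>{4..<k}. c i) = x"
    and p: "bA * bB * bC * bD * (\<Prod>i\<in>{4..<k}. c i) = q"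
  shows "\<exists>a::nat \<Rightarrow> 'a. x = (\<Sum>i<k. a i) \<and> (\<Prod>i<k. a i) = q"
proof -
  define a where "a i = (if i = 0 then bA else if i = 1 then bB else if i = 2 then bC
      else if i = 3 then bD else c i)" for i
  have e1: "(\<Sum>i\<in>{4..<k}. a i) = (\<Sum>i\<in>{4..<k}. c i)"
    by (rule sum.cong) (auto simp: a_def)
  have e2: "(\<Prod>i\<in>{4..<k}. a i) = (\<Prod>i\<in>{4..<k}. c i)"
    by (rule prod.cong) (auto simp: a_def)
  show ?thesis
    apply (rule exI[of _ a])
    using s p e1 e2 split4_sum[OF k, of a] split4_prod[OF k, of a]
    by (simp add: a_def)
qed

lemma ones_sum: "k \<ge> 4 \<Longrightarrow> (\<Sum>i\<in>{4..<k}. (1::'a::field)) = of_nat k - 4"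
  by (simp add: of_nat_diff)

lemma mix_sum: assumes "k \<ge> 6"
  shows "(\<Sum>i\<in>{4..<k}. (if i < 6 then -1 else 1::'a::field)) = of_nat k - 8"
    and "(\<Prod>i\<in>{4..<k}. (if i < 6 then -1 else 1::'a::field)) = 1"
proof -
  have u: "{4..<k} = {4,5} \<union> {6..<k}" using assms by auto
  have "(\<Sum>i\<in>{4..<k}. (if i < 6 then -1 else 1::'a)) = -2 + (\<Sum>i\<in>{6..<k}. 1)"
    unfolding u by (subst sum.union_disjoint) auto
  also have "\<dots> = of_nat k - 8" using assms by (simp add: of_nat_diff)
  finally show "(\<Sum>i\<in>{4..<k}. (if i < 6 then -1 else 1::'a)) = of_nat k - 8" .
  show "(\<Prod>i\<in>{4..<k}. (if i < 6 then -1 else 1::'a)) = 1"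
    unfolding u by (subst prod.union_disjoint) auto
qed

lemma nz2: assumes "(2::'a::field) \<noteq> 0" shows "(4::'a) \<noteq> 0" "(8::'a) \<noteq> 0"
proof -
  have "(4::'a) = 2 * 2" "(8::'a) = 2 * 2 * 2" by simp_all
  then show "(4::'a) \<noteq> 0" "(8::'a) \<noteq> 0" using assms by (metis mult_eq_0_iff)+
qed

lemma nz3: assumes "(2::'a::field) \<noteq> 0" "(3::'a) \<noteq> 0"
  shows "(6::'a) \<noteq> 0" "(9::'a) \<noteq> 0" "(12::'a) \<noteq> 0" "(36::'a) \<noteq> 0" "(64::'a) \<noteq> 0" "(576::'a) \<noteq> 0"
proof -
  have "(6::'a) = 2 * 3" "(9::'a) = 3 * 3" "(12::'a) = 2*2*3" "(36::'a) = 2*2*3*3"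
    "(64::'a) = 2*2*2*2*2*2" "(576::'a) = 2*2*2*2*2*2*3*3" by simp_all
  then show "(6::'a) \<noteq> 0" "(9::'a) \<noteq> 0" "(12::'a) \<noteq> 0" "(36::'a) \<noteq> 0" "(64::'a) \<noteq> 0" "(576::'a) \<noteq> 0"
    using assms by (metis mult_eq_0_iff)+
qed

lemma A: assumes "(2::'a::field) \<noteq> 0" "(y::'a) \<noteq> 0"
  shows "2/y + (-2/y) + y/2 + y/2 = y" "(2/y) * (-2/y) * (y/2) * (y/2) = -1"
  using assms nz2[OF assms(1)] by (auto simp: field_simps)

lemma B: assumes "(2::'a::field) \<noteq> 0" "(3::'a) \<noteq> 0"
  shows "-9/2 + 1/6 + 1/3 + (4::'a) = 0" "(-9/2) * (1/6) * (1/3) * (4::'a) = -1"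
  using assms nz2[OF assms(1)] nz3[OF assms] by (simp_all add: field_simps)

lemma C: assumes "(2::'a::field) \<noteq> 0" "(3::'a) \<noteq> 0" "(y::'a) \<noteq> 0"
  shows "8/(3*y) + (-8/(3*y)) + 9*y/8 + (-y/8) = y" "(8/(3*y)) * (-8/(3*y)) * (9*y/8) * (-y/8) = 1"
  using assms nz2[OF assms(1)] nz3[OF assms(1,2)] by (simp_all add: field_simps)

theorem theorem1p2:
  fixes k :: nat
  assumes "CHAR('a::field) \<noteq> 2" and "k \<ge> 4"
  shows "(\<forall>x::'a. (CHAR('a) \<noteq> 3 \<or> x \<noteq> 0) \<longrightarrow>
           (\<exists>a::nat \<Rightarrow> 'a. x = (\<Sum>i<k. a i) \<and> (\<Prod>i<k. a i) = -1))
      \<and> (CHAR('a) \<noteq> 3 \<longrightarrow> (\<forall>x::'a.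
           \<exists>a::nat \<Rightarrow> 'a. x = (\<Sum>i<k. a i) \<and> (\<Prod>i<k. a i) = 1))"
proof (intro conjI allI impI)
  have two: "(2::'a) \<noteq> 0" using two_nz assms(1) by blast
  have k: "k \<ge> 4" by fact
  have o1: "(\<Sum>i\<in>{4..<k}. (1::'a)) = of_nat k - 4" using ones_sum[OF k] .
  have o2: "(\<Prod>i\<in>{4..<k}. (1::'a)) = 1" by simp
  fix x :: 'a
  {
    assume h: "CHAR('a) \<noteq> 3 \<or> x \<noteq> 0"
    show "\<exists>a::nat \<Rightarrow> 'a. x = (\<Sum>i<k. a i) \<and> (\<Prod>i<k. a i) = -1"
    proof (cases "x - (of_nat k - 4) = 0")
      case False
      define y where "y = x - (of_nat k - 4)"
      have y: "y \<noteq> 0" using False by (simp add: y_def)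
      show ?thesis
        apply (rule build[OF k, where c="\<lambda>_. 1" and bA="2/y" and bB="-2/y" and bC="y/2" and bD="y/2"])
        subgoal unfolding o1 A(1)[OF two y] by (simp add: y_def)
        subgoal unfolding o2 A(2)[OF two y] by simp
        done
    next
      case x0: True
      show ?thesis
      proof (cases "CHAR('a) = 3")
        case False
        have three: "(3::'a) \<noteq> 0" using three_nz False by blast
        show ?thesis
          apply (rule build[OF k, where c="\<lambda>_. 1" and bA="-9/2" and bB="1/6" and bC="1/3" and bD="4"])
        subgoal unfolding o1 B(1)[OF two three] using x0 by simp
        subgoal unfolding o2 B(2)[OF two three] by simp
        done
      next
        case c3: True
        have three: "(3::'a) = 0" using three_z c3 by blast
        have xnz: "x \<noteq> 0" using h c3 by simp
        show ?thesis
        proof (cases "k \<ge> 6")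
          case True
          have four: "(4::'a) \<noteq> 0" using nz2[OF two] by simp
          have xk: "x = of_nat k - 4" using x0 by simp
          have y: "x - (of_nat k - 8) = 4" unfolding xk by (simp add: algebra_simps)
          show ?thesis
            apply (rule build[OF k, where c="\<lambda>i. if i < 6 then -1 else 1" and bA="2/4" and bB="-2/4" and bC="4/2" and bD="4/2"])
            subgoal unfolding mix_sum(1)[OF True] A(1)[OF two four] using xk by (simp add: algebra_simps)
            subgoal unfolding mix_sum(2)[OF True] A(2)[OF two four] by simp
            done
        next
          case False
          then have k5: "k = 4 \<or> k = 5" using k by auto
          show ?thesis
          proof (cases "k = 4")
            case True
            then show ?thesis using x0 xnz by simp
          next
            case False
            then have k5: "k = 5" using k5 by simp
            have x1: "x = 1" using x0 k5 by simp
            have "(5::'a) + 1 = 2 * 3" by simp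
            then have "(5::'a) = -1" using three by (simp add: eq_neg_iff_add_eq_0)
            then show ?thesis using k5 x1
              by (intro exI[of _ "\<lambda>_. -1"]) (simp add: numeral_eq_Suc)
          qed
        qed
      qed
    qed
  }
  {
    assume c3: "CHAR('a) \<noteq> 3"
    have three: "(3::'a) \<noteq> 0" using three_nz c3 by blast
    show "\<exists>a::nat \<Rightarrow> 'a. x = (\<Sum>i<k. a i) \<and> (\<Prod>i<k. a i) = 1"
    proof (cases "x - (of_nat k - 4) = 0")
      case False
      define y where "y = x - (of_nat k - 4)"
      have y: "y \<noteq> 0" using False by (simp add: y_def)
      show ?thesis
        apply (rule build[OF k, where c="\<lambda>_. 1" and bA="8/(3*y)" and bB="-8/(3*y)" and bC="9*y/8" and bD="-y/8"])
        subgoal unfolding o1 C(1)[OF two three y] by (simp add: y_def)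
        subgoal unfolding o2 C(2)[OF two three y] by simp
        done
    next
      case True
      show ?thesis
        apply (rule build[OF k, where c="\<lambda>_. 1" and bA="1" and bB="-1" and bC="1" and bD="-1"])
        using o1 o2 True by simp_all
    qed
  }
qed

end
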